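(* Let $V$ be an $R$-module that is a Whittaker module of type $\eta$, with cyclic Whittaker vector $w$. Then \[ R_w = R Z_V + R R_\eta(E). \]
   Context: Let $f\in\mathbb{C}[H]$ be a polynomial. $R=R(f)$ is the associative $\mathbb{C}$-algebra generated by $E,F,H$ with relations $EF-FE=f(H)$, $HE-EH=E$, $HF-FH=-F$; the monomials $F^iH^jE^k$ ($i,j,k\ge 0$) form a $\mathbb{C}$-basis of $R$. Let $R(E)=\mathbb{C}[E]$ be the subalgebra generated by $E$. Let $u\in\mathbb{C}[H]$ satisfy $f(H)=\tfrac12(u(H+1)-u(H))$ and $\Omega=2FE+u(H+1)$; the center $Z=Z(R)$ is the polynomial ring $\mathbb{C}[\Omega]$. Fix an algebra homomorphism $\eta:R(E)\to\mathbb{C}$ with $\eta(E)\neq 0$, and let $R_\eta(E)=\ker\eta$. A vector $v$ of an $R$-module $V$ is a Whittaker vector (of type $\eta$) if $Ev=\eta(E)v$; $V$ is a Whittaker module of type $\eta$ if $V=Rv$ for some Whittaker vector $v$ (a cyclic Whittaker vector). For an $R$-module $V$, $Z_V=\mathrm{Ann}_R(V)\cap Z(R)$, and for $w\in V$, $R_w=\mathrm{Ann}_R(w)=\{r\in R: rw=0\}$. *)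

theory Defs
  imports "HOL-Computational_Algebra.Polynomial"
begin

text \<open>A complex algebra is modelled as a ring 'r together with a ring homomorphism
  sc from the complex numbers into the centre of 'r (the scalars).\<close>
definition scalars :: "(complex \<Rightarrow> 'r::ring_1) \<Rightarrow> bool" where
  "scalars sc \<longleftrightarrow> (\<forall>a b. sc (a + b) = sc a + sc b) \<and> (\<forall>a b. sc (a * b) = sc a * sc b)
     \<and> sc 1 = 1 \<and> (\<forall>a r. sc a * r = r * sc a)"

definition peval :: "(complex \<Rightarrow> 'r::ring_1) \<Rightarrow> complex poly \<Rightarrow> 'r \<Rightarrow> 'r" where
  "peval sc p x = (\<Sum>i\<le>degree p. sc (coeff p i) * x ^ i)"

definition is_R_algebra ::
  "(complex \<Rightarrow> 'r::ring_1) \<Rightarrow> complex poly \<Rightarrow> 'r \<Rightarrow> 'r \<Rightarrow> 'r \<Rightarrow> bool" where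
  "is_R_algebra sc f E F H \<longleftrightarrow> scalars sc
     \<and> E * F - F * E = peval sc f H
     \<and> H * E - E * H = E
     \<and> H * F - F * H = - F
     \<and> (\<forall>r. \<exists>!c :: nat \<times> nat \<times> nat \<Rightarrow> complex. finite {m. c m \<noteq> 0} \<and>
            r = (\<Sum>m\<in>{m. c m \<noteq> 0}. sc (c m) *
                   (case m of (i, j, k) \<Rightarrow> F ^ i * H ^ j * E ^ k)))"

definition is_module :: "('r::ring_1 \<Rightarrow> 'v::ab_group_add \<Rightarrow> 'v) \<Rightarrow> bool" where
  "is_module act \<longleftrightarrow> (\<forall>a b v. act (a + b) v = act a v + act b v)
     \<and> (\<forall>a v w. act a (v + w) = act a v + act a w)
     \<and> (\<forall>a b v. act (a * b) v = act a (act b v))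
     \<and> (\<forall>v. act 1 v = v)"

definition center :: "'r::ring_1 set" where
  "center = {z. \<forall>r. z * r = r * z}"

definition annihilator :: "('r::ring_1 \<Rightarrow> 'v::ab_group_add \<Rightarrow> 'v) \<Rightarrow> 'r set" where
  "annihilator act = {r. \<forall>v. act r v = 0}"

definition ann_vec :: "('r::ring_1 \<Rightarrow> 'v::ab_group_add \<Rightarrow> 'v) \<Rightarrow> 'v \<Rightarrow> 'r set" where
  "ann_vec act w = {r. act r w = 0}"

definition Z_ann :: "('r::ring_1 \<Rightarrow> 'v::ab_group_add \<Rightarrow> 'v) \<Rightarrow> 'r set" where
  "Z_ann act = annihilator act \<inter> center"

text \<open>R_eta(E) = kernel of eta : C[E] \<rightarrow> C, where eta(p(E)) = p(a), a = eta(E).\<close>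
definition R_eta :: "(complex \<Rightarrow> 'r::ring_1) \<Rightarrow> 'r \<Rightarrow> complex \<Rightarrow> 'r set" where
  "R_eta sc E a = {peval sc p E | p. poly p a = 0}"

definition lspan :: "'r::ring_1 set \<Rightarrow> 'r set" where
  "lspan S = {(\<Sum>i<(n::nat). c i * s i) | n c s. \<forall>i<n. s i \<in> S}"

definition whittaker_vector ::
  "(complex \<Rightarrow> 'r::ring_1) \<Rightarrow> ('r \<Rightarrow> 'v::ab_group_add \<Rightarrow> 'v) \<Rightarrow> 'r \<Rightarrow> complex \<Rightarrow> 'v \<Rightarrow> bool" where
  "whittaker_vector sc act E a v \<longleftrightarrow> act E v = act (sc a) v"

definition cyclic_whittaker ::
  "(complex \<Rightarrow> 'r::ring_1) \<Rightarrow> ('r \<Rightarrow> 'v::ab_group_add \<Rightarrow> 'v) \<Rightarrow> 'r \<Rightarrow> complex \<Rightarrow> 'v \<Rightarrow> bool" where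
  "cyclic_whittaker sc act E a w \<longleftrightarrow> whittaker_vector sc act E a w \<and> (\<forall>v. \<exists>r. v = act r w)"

end

theory Submission
  imports Defs
begin


lemma lspan_0: "0 \<in> lspan S"
  unfolding lspan_def by (rule CollectI, rule exI[of _ 0]) auto

lemma lspan_step: assumes "x \<in> lspan S" "s0 \<in> S" shows "x + c0 * s0 \<in> lspan S"
proof -
  obtain n c s where x: "x = (\<Sum>i<(n::nat). c i * s i)" and s: "\<forall>i<n. s i \<in> S"
    using assms(1) unfolding lspan_def mem_Collect_eq by blast
  have "x + c0 * s0 = (\<Sum>i<Suc n. (c(n:=c0)) i * (s(n:=s0)) i)"
    by (simp add: x)
  moreover have "\<forall>i<Suc n. (s(n:=s0)) i \<in> S" using s assms(2) by (simp add: less_Suc_eq)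
  ultimately show ?thesis unfolding lspan_def by blast
qed

lemma lspan_base: "s \<in> S \<Longrightarrow> s \<in> lspan S"
  using lspan_step[OF lspan_0, of s S 1] by simp

lemma lspan_add: assumes "x \<in> lspan S" "y \<in> lspan S" shows "x + y \<in> lspan S"
proof -
  obtain m d t where y: "y = (\<Sum>i<(m::nat). d i * t i)" and t: "\<forall>i<m. t i \<in> S"
    using assms(2) unfolding lspan_def mem_Collect_eq by blast
  have "\<forall>k\<le>m. x + (\<Sum>i<k. d i * t i) \<in> lspan S"
  proof
    fix k show "k \<le> m \<longrightarrow> x + (\<Sum>i<k. d i * t i) \<in> lspan S"
    proof (induction k)
      case 0 then show ?case using assms(1) by simp
    next
      case (Suc k)
      then show ?case using lspan_step[of "x + (\<Sum>i<k. d i * t i)" S "t k" "d k"] t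
        by (simp add: add.assoc)
    qed
  qed
  then show ?thesis using y by simp
qed

lemma lspan_lmult: assumes "x \<in> lspan S" shows "r * x \<in> lspan S"
proof -
  obtain n c s where x: "x = (\<Sum>i<(n::nat). c i * s i)" and s: "\<forall>i<n. s i \<in> S"
    using assms(1) unfolding lspan_def mem_Collect_eq by blast
  have "r * x = (\<Sum>i<n. (r * c i) * s i)" by (simp add: x sum_distrib_left mult.assoc)
  then show ?thesis unfolding lspan_def mem_Collect_eq using s
    by (intro exI[of _ n] exI[of _ "\<lambda>i. r * c i"] exI[of _ s]) simp
qed

lemma lspan_diff: "x \<in> lspan S \<Longrightarrow> y \<in> lspan S \<Longrightarrow> x - y \<in> lspan S"
  using lspan_add[of x S "(-1) * y"] lspan_lmult[of y S "-1"] by simp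

lemma lspan_sum: "(\<And>i. i \<in> A \<Longrightarrow> g i \<in> lspan S) \<Longrightarrow> sum g A \<in> lspan S"
proof (induction A rule: infinite_finite_induct)
  case (infinite A) then show ?case by (simp add: lspan_0)
next
  case empty then show ?case by (simp add: lspan_0)
next
  case (insert x F) then show ?case by (simp add: lspan_add)
qed

locale scal =
  fixes sc :: "complex \<Rightarrow> 'r::ring_1"
  assumes S: "scalars sc"
begin

lemma sc_add: "sc (x + y) = sc x + sc y" using S unfolding scalars_def by blast
lemma sc_mult: "sc (x * y) = sc x * sc y" using S unfolding scalars_def by blast
lemma sc_1[simp]: "sc 1 = 1" using S unfolding scalars_def by blast
lemma sc_comm: "sc x * r = r * sc x" using S unfolding scalars_def by blast
lemma sc_0[simp]: "sc 0 = 0" using sc_add[of 0 0] by simp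
lemma sc_neg: "sc (- x) = - sc x"
proof -
  have "sc x + sc (-x) = 0" using sc_add[of x "-x"] by simp
  then show ?thesis using minus_unique by metis
qed
lemma sc_diff: "sc (x - y) = sc x - sc y" using sc_add[of x "-y"] sc_neg[of y] by simp
lemma sc_of_nat: "sc (of_nat n) = of_nat n"
  by (induction n) (simp_all add: sc_add)
lemma sc_inv: "x \<noteq> 0 \<Longrightarrow> sc (inverse x) * sc x = 1"
  using sc_mult[of "inverse x" x] by simp

lemma scX: "sc k * X ^ Suc i = X * (sc k * X ^ i)"
proof -
  have "sc k * X ^ Suc i = (sc k * X) * X ^ i" by (simp add: mult.assoc)
  also have "\<dots> = X * (sc k * X ^ i)" by (simp only: sc_comm[of k X] mult.assoc)
  finally show ?thesis .
qed

lemma peval_alt: assumes "degree p < N"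
  shows "peval sc p X = (\<Sum>i<N. sc (coeff p i) * X ^ i)"
proof -
  have "peval sc p X = (\<Sum>i<Suc (degree p). sc (coeff p i) * X ^ i)"
    unfolding peval_def using lessThan_Suc_atMost by simp
  also have "\<dots> = (\<Sum>i<N. sc (coeff p i) * X ^ i)"
    apply (rule sum.mono_neutral_left)
    using assms by (auto simp: coeff_eq_0)
  finally show ?thesis .
qed

lemma peval_pCons: "peval sc (pCons c p) X = sc c + X * peval sc p X"
proof -
  have d: "degree (pCons c p) < Suc (Suc (degree p))" using degree_pCons_le[of c p] by linarith
  have "peval sc (pCons c p) X = (\<Sum>i<Suc (Suc (degree p)). sc (coeff (pCons c p) i) * X ^ i)"
    by (rule peval_alt[OF d])
  also have "\<dots> = sc c + (\<Sum>i<Suc (degree p). sc (coeff p i) * X ^ (Suc i))"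
    by (subst sum.lessThan_Suc_shift) simp
  also have "\<dots> = sc c + X * (\<Sum>i<Suc (degree p). sc (coeff p i) * X ^ i)"
    by (simp only: sum_distrib_left scX)
  also have "\<dots> = sc c + X * peval sc p X" using peval_alt[of p "Suc (degree p)"] by simp
  finally show ?thesis .
qed

lemma peval_0[simp]: "peval sc 0 X = 0" unfolding peval_def by simp

lemma peval_const: "peval sc [:c:] X = sc c" by (simp add: peval_pCons)

lemma peval_add: "peval sc (p + q) X = peval sc p X + peval sc q X"
proof (induction p arbitrary: q)
  case 0 then show ?case by simp
next
  case (pCons a p)
  obtain b q' where q: "q = pCons b q'" by (cases q) auto
  show ?case using pCons.IH[of q'] by (simp add: q peval_pCons sc_add distrib_left)
qed

lemma peval_smult: "peval sc (smult c p) X = sc c * peval sc p X"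
proof (induction p)
  case 0 then show ?case by simp
next
  case (pCons a p)
  have "X * (sc c * peval sc p X) = sc c * (X * peval sc p X)"
    by (simp only: mult.assoc[symmetric] sc_comm[of c X])
  then show ?case using pCons by (simp add: peval_pCons sc_mult distrib_left)
qed

lemma peval_mult: "peval sc (p * q) X = peval sc p X * peval sc q X"
proof (induction p)
  case 0 then show ?case by simp
next
  case (pCons a p)
  then show ?case by (simp add: peval_pCons peval_add peval_smult distrib_right mult.assoc)
qed

lemma peval_neg: "peval sc (- p) X = - peval sc p X"
  using peval_smult[of "-1" p X] by (simp add: sc_neg)

lemma peval_diff: "peval sc (p - q) X = peval sc p X - peval sc q X"
  using peval_add[of p "-q" X] peval_neg[of q X] by simp

lemma peval_pcompose: "peval sc (pcompose p q) X = peval sc p (peval sc q X)"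
proof (induction p)
  case 0 then show ?case by simp
next
  case (pCons a p)
  then show ?case by (simp only: pcompose_pCons peval_add peval_mult peval_const peval_pCons peval_0 mult_zero_right add_0_right)
qed

lemma peval_monom: "peval sc (monom c k) X = sc c * X ^ k"
proof (induction k)
  case 0 then show ?case by (simp add: monom_0 peval_const)
next
  case (Suc k)
  then show ?case using scX[of c X k] by (simp add: monom_Suc peval_pCons)
qed

lemma peval_X_comm: "peval sc p X * X = X * peval sc p X"
proof (induction p)
  case 0 then show ?case by simp
next
  case (pCons a p)
  have "(sc a + X * peval sc p X) * X = sc a * X + X * (peval sc p X * X)"
    by (simp add: distrib_right mult.assoc)
  also have "\<dots> = X * sc a + X * (X * peval sc p X)" using pCons sc_comm[of a X] by simp
  also have "\<dots> = X * (sc a + X * peval sc p X)" by (simp add: distrib_left)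
  finally show ?case by (simp add: peval_pCons)
qed

end


definition dd :: "(complex \<Rightarrow> complex) \<Rightarrow> bool" where
  "dd g \<longleftrightarrow> (\<exists>v. \<forall>t. poly v t - poly v (t - 1) = g t)"

lemma dd_add: "dd g \<Longrightarrow> dd h \<Longrightarrow> dd (\<lambda>t. g t + h t)"
  unfolding dd_def
proof (elim exE)
  fix v w assume v: "\<forall>t. poly v t - poly v (t - 1) = g t" and w: "\<forall>t. poly w t - poly w (t - 1) = h t"
  show "\<exists>u. \<forall>t. poly u t - poly u (t - 1) = g t + h t"
    by (rule exI[of _ "v + w"]) (simp add: v[rule_format, symmetric] w[rule_format, symmetric])
qed

lemma dd_smult: "dd g \<Longrightarrow> dd (\<lambda>t. c * g t)"
  unfolding dd_def
proof (elim exE)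
  fix v assume v: "\<forall>t. poly v t - poly v (t - 1) = g t"
  show "\<exists>u. \<forall>t. poly u t - poly u (t - 1) = c * g t"
    by (rule exI[of _ "smult c v"]) (simp add: v[rule_format, symmetric] right_diff_distrib)
qed

lemma dd_zero: "dd (\<lambda>t. 0)"
  unfolding dd_def by (rule exI[of _ 0]) simp

lemma dd_sum: fixes n :: nat shows "(\<And>k. k < n \<Longrightarrow> dd (g k)) \<Longrightarrow> dd (\<lambda>t. \<Sum>k<n. g k t)"
proof (induction n)
  case 0 then show ?case by (simp add: dd_zero)
next
  case (Suc n)
  then show ?case using dd_add[of "\<lambda>t. \<Sum>k<n. g k t" "g n"] by simp
qed

lemma binom_aux: fixes t :: complex
  shows "(t - 1) ^ Suc n = (\<Sum>k<n. of_nat (Suc n choose k) * t ^ k * (-1) ^ (Suc n - k))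
          - of_nat (Suc n) * t ^ n + t ^ Suc n"
proof -
  have "(t - 1) ^ Suc n = (t + (-1)) ^ Suc n" by simp
  also have "\<dots> = (\<Sum>k\<le>Suc n. of_nat (Suc n choose k) * t ^ k * (-1) ^ (Suc n - k))"
    by (rule binomial_ring)
  also have "\<dots> = (\<Sum>k<n. of_nat (Suc n choose k) * t ^ k * (-1) ^ (Suc n - k))
          - of_nat (Suc n) * t ^ n + t ^ Suc n"
    by (simp add: lessThan_Suc_atMost[symmetric])
  finally show ?thesis .
qed

lemma dd_pow: "dd (\<lambda>t. t ^ n)"
proof (induction n rule: less_induct)
  case (less n)
  define b :: "nat \<Rightarrow> complex" where "b k = of_nat (Suc n choose k) * (-1) ^ (Suc n - k)" for k
  have h: "dd (\<lambda>t. t ^ Suc n - (t - 1) ^ Suc n)"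
    unfolding dd_def by (rule exI[of _ "monom 1 (Suc n)"]) (simp add: poly_monom)
  have s: "dd (\<lambda>t. \<Sum>k<n. b k * t ^ k)"
    by (rule dd_sum) (rule dd_smult, rule less, simp)
  have "dd (\<lambda>t. inverse (of_nat (Suc n)) * ((t ^ Suc n - (t - 1) ^ Suc n) + (\<Sum>k<n. b k * t ^ k)))"
    by (rule dd_smult, rule dd_add[OF h s])
  moreover have "inverse (of_nat (Suc n)) * ((t ^ Suc n - (t - 1) ^ Suc n) + (\<Sum>k<n. b k * t ^ k)) = t ^ n"
    for t :: complex
  proof -
    have "(\<Sum>k<n. b k * t ^ k) = (\<Sum>k<n. of_nat (Suc n choose k) * t ^ k * (-1) ^ (Suc n - k))"
      unfolding b_def by (simp add: mult_ac)
    then have "(t ^ Suc n - (t - 1) ^ Suc n) + (\<Sum>k<n. b k * t ^ k) = of_nat (Suc n) * t ^ n"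
      unfolding binom_aux by (simp only: ) (simp add: algebra_simps)
    then show ?thesis by (simp del: of_nat_Suc)
  qed
  ultimately show ?case by simp
qed

lemma antidiff: "\<exists>v::complex poly. v - pcompose v [:-1,1:] = smult 2 f"
proof -
  have "dd (\<lambda>t. \<Sum>i<Suc (degree f). (2 * coeff f i) * t ^ i)"
    by (rule dd_sum, rule dd_smult, rule dd_pow)
  then obtain v where v: "\<And>t. poly v t - poly v (t - 1) = (\<Sum>i<Suc (degree f). (2 * coeff f i) * t ^ i)"
    unfolding dd_def by blast
  have "poly (v - pcompose v [:-1,1:]) = poly (smult 2 f)"
  proof
    fix t
    have "poly (v - pcompose v [:-1,1:]) t = poly v t - poly v (t - 1)"
      by (simp add: poly_pcompose)
    also have "\<dots> = 2 * (\<Sum>i<Suc (degree f). coeff f i * t ^ i)"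
      by (simp add: v sum_distrib_left mult.assoc)
    also have "\<dots> = poly (smult 2 f) t" by (simp add: poly_altdef lessThan_Suc_atMost sum_distrib_left mult.assoc)
    finally show "poly (v - pcompose v [:-1,1:]) t = poly (smult 2 f) t" .
  qed
  then show ?thesis using poly_eq_poly_eq_iff by blast
qed



locale wt =
  fixes sc :: "complex \<Rightarrow> 'r::ring_1" and f :: "complex poly" and E F H :: 'r
    and act :: "'r \<Rightarrow> 'v::ab_group_add \<Rightarrow> 'v" and a :: complex and w :: 'v
  assumes R: "is_R_algebra sc f E F H"
    and M: "is_module act"
    and a0: "a \<noteq> 0"
    and W: "cyclic_whittaker sc act E a w"
begin

sublocale scal sc using R unfolding is_R_algebra_def by unfold_locales blast

lemma rel_EF: "E * F = F * E + peval sc f H" using R unfolding is_R_algebra_def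
  by (metis diff_add_cancel add.commute)
lemma rel_EH: "E * H = (H - 1) * E"
proof -
  have "H * E - E * H = E" using R unfolding is_R_algebra_def by blast
  then show ?thesis by (simp add: algebra_simps)
qed
lemma rel_FH: "F * H = (H + 1) * F"
proof -
  have "H * F - F * H = - F" using R unfolding is_R_algebra_def by blast
  then show ?thesis by (simp add: algebra_simps)
qed

lemma PBW: "\<exists>c :: nat \<times> nat \<times> nat \<Rightarrow> complex. finite {m. c m \<noteq> 0} \<and>
            r = (\<Sum>m\<in>{m. c m \<noteq> 0}. sc (c m) * (case m of (i, j, k) \<Rightarrow> F ^ i * H ^ j * E ^ k))"
  using R unfolding is_R_algebra_def by blast

lemma act_addl: "act (x + y) v = act x v + act y v" using M unfolding is_module_def by blast
lemma act_addr: "act x (u + v) = act x u + act x v" using M unfolding is_module_def by blast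
lemma act_mult: "act (x * y) v = act x (act y v)" using M unfolding is_module_def by blast
lemma act_one[simp]: "act 1 v = v" using M unfolding is_module_def by blast
lemma act_zl[simp]: "act 0 v = 0" using act_addl[of 0 0 v] by simp
lemma act_zr[simp]: "act x 0 = 0" using act_addr[of x 0 0] by simp
lemma act_negl: "act (- x) v = - act x v"
proof -
  have "act x v + act (-x) v = 0" using act_addl[of x "-x" v] by simp
  then show ?thesis using minus_unique by metis
qed
lemma act_diffl: "act (x - y) v = act x v - act y v"
  using act_addl[of x "-y" v] act_negl[of y v] by simp
lemma act_suml: "act (sum g A) v = (\<Sum>i\<in>A. act (g i) v)"
  by (induction A rule: infinite_finite_induct) (simp_all add: act_addl)

lemma sc_inv_act: assumes "c \<noteq> 0" "act (sc c) x = 0" shows "x = 0"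
proof -
  have "x = act (sc (inverse c) * sc c) x" using sc_inv[OF assms(1)] by simp
  also have "\<dots> = 0" by (simp add: act_mult assms(2))
  finally show ?thesis .
qed

definition vv :: "complex poly" where "vv = (SOME v. v - pcompose v [:-1,1:] = smult 2 f)"
definition U :: 'r where "U = peval sc vv H"
definition Om :: 'r where "Om = F * E + F * E + U"

lemma sc2: "sc 2 = 2" using sc_add[of 1 1] by simp

lemma ident: "peval sc vv X - peval sc vv (X - 1) = peval sc f X + peval sc f X"
proof -
  have v: "vv - pcompose vv [:-1,1:] = smult 2 f"
    unfolding vv_def using antidiff[of f] by (rule someI_ex)
  have "peval sc (vv - pcompose vv [:-1,1:]) X = peval sc (smult 2 f) X" by (simp only: v)
  moreover have "peval sc [:-1,1:] X = X - 1" by (simp add: peval_pCons sc_neg)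
  ultimately show ?thesis
    by (simp add: peval_diff peval_pcompose peval_smult sc2 mult_2)
qed

lemma E_peval: "E * peval sc p H = peval sc p (H - 1) * E"
proof (induction p)
  case 0 then show ?case by simp
next
  case (pCons c p)
  have "E * peval sc (pCons c p) H = E * sc c + (E * H) * peval sc p H"
    by (simp add: peval_pCons distrib_left mult.assoc)
  also have "\<dots> = sc c * E + (H - 1) * (E * peval sc p H)"
    by (simp add: rel_EH sc_comm mult.assoc)
  also have "\<dots> = peval sc (pCons c p) (H - 1) * E"
    by (simp add: pCons.IH peval_pCons distrib_right mult.assoc)
  finally show ?case .
qed

lemma F_peval: "F * peval sc p H = peval sc p (H + 1) * F"
proof (induction p)
  case 0 then show ?case by simp
next
  case (pCons c p)
  have "F * peval sc (pCons c p) H = F * sc c + (F * H) * peval sc p H"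
    by (simp add: peval_pCons distrib_left mult.assoc)
  also have "\<dots> = sc c * F + (H + 1) * (F * peval sc p H)"
    by (simp add: rel_FH sc_comm mult.assoc)
  also have "\<dots> = peval sc (pCons c p) (H + 1) * F"
    by (simp add: pCons.IH peval_pCons distrib_right mult.assoc)
  finally show ?case .
qed

lemma Om_H: "Om * H = H * Om"
proof -
  have HF: "H * F = F * H - F" using rel_FH by (simp add: algebra_simps)
  have HE: "H * E = E * H + E" using rel_EH by (simp add: algebra_simps)
  have "H * (F * E) = F * E * H"
  proof -
    have "H * (F * E) = (F * H - F) * E" by (simp add: HF flip: mult.assoc)
    also have "\<dots> = F * (H * E) - F * E" by (simp add: algebra_simps)
    also have "\<dots> = F * E * H" by (simp add: HE algebra_simps)
    finally show ?thesis .
  qed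
  moreover have "U * H = H * U" unfolding U_def by (rule peval_X_comm)
  ultimately show ?thesis unfolding Om_def by (simp add: algebra_simps)
qed

lemma Om_E: "E * Om = Om * E"
proof -
  have EU: "E * U = (U - peval sc f H - peval sc f H) * E"
    unfolding U_def E_peval using ident[of H] by (simp add: algebra_simps)
  have "E * (F * E) = F * E * E + peval sc f H * E"
    by (simp add: rel_EF algebra_simps flip: mult.assoc)
  then show ?thesis unfolding Om_def by (simp add: EU algebra_simps)
qed

lemma Om_F: "F * Om = Om * F"
proof -
  have FU: "F * U = (U + peval sc f (H + 1) + peval sc f (H + 1)) * F"
    unfolding U_def F_peval using ident[of "H + 1"] by (simp add: algebra_simps)
  have "F * E * F = F * F * E + peval sc f (H + 1) * F"
    by (simp add: mult.assoc rel_EF algebra_simps F_peval)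
  then show ?thesis unfolding Om_def by (simp add: FU algebra_simps)
qed

lemma comm_pow: "z * X = X * z \<Longrightarrow> z * X ^ n = X ^ n * (z::'r)"
proof (induction n)
  case 0 then show ?case by simp
next
  case (Suc n)
  have "z * X ^ Suc n = (z * X) * X ^ n" by (simp add: mult.assoc)
  also have "\<dots> = X * (z * X ^ n)" using Suc by (simp add: mult.assoc)
  also have "\<dots> = X ^ Suc n * z" using Suc by (simp add: mult.assoc)
  finally show ?case .
qed

lemma center_I: assumes "z * E = E * z" "z * F = F * z" "z * H = H * z" "\<And>c. z * sc c = sc c * z"
  shows "z \<in> center"
  unfolding center_def
proof (rule CollectI, rule allI)
  fix r
  obtain c where r: "r = (\<Sum>m\<in>{m. c m \<noteq> 0}. sc (c m) * (case m of (i, j, k) \<Rightarrow> F ^ i * H ^ j * E ^ k))"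
    using PBW[of r] by blast
  have zl: "z * (X ^ n * y) = X ^ n * (z * y)" if "z * X = X * z" for X y n
    using comm_pow[OF that, of n] by (simp add: mult.assoc[symmetric])
  have zs: "z * (sc d * y) = sc d * (z * y)" for d y
    using assms(4)[of d] by (simp add: mult.assoc[symmetric])
  have "z * (sc (c m) * (case m of (i, j, k) \<Rightarrow> F ^ i * H ^ j * E ^ k))
      = (sc (c m) * (case m of (i, j, k) \<Rightarrow> F ^ i * H ^ j * E ^ k)) * z" for m
  proof -
    obtain i j k where m: "m = (i, j, k)" by (cases m) auto
    have "z * (sc (c m) * (F ^ i * (H ^ j * E ^ k))) = sc (c m) * (F ^ i * (H ^ j * (z * E ^ k)))"
      by (simp only: zs zl[OF assms(2)] zl[OF assms(3)])
    also have "\<dots> = sc (c m) * (F ^ i * (H ^ j * (E ^ k * z)))"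
      by (simp only: comm_pow[OF assms(1)])
    finally show ?thesis by (simp add: m mult.assoc)
  qed
  then show "z * r = r * z" unfolding r by (simp add: sum_distrib_left sum_distrib_right)
qed

lemma Om_center: "Om \<in> center"
  by (rule center_I) (simp_all add: Om_E Om_F Om_H sc_comm)


lemma act_sumr: "act x (sum g A) = (\<Sum>i\<in>A. act x (g i))"
  by (induction A rule: infinite_finite_induct) (simp_all add: act_addr)

lemma center_comm: "z \<in> center \<Longrightarrow> z * r = r * z" unfolding center_def by blast
lemma center_0: "0 \<in> center" unfolding center_def by simp
lemma center_1: "1 \<in> center" unfolding center_def by simp
lemma center_add: "x \<in> center \<Longrightarrow> y \<in> center \<Longrightarrow> x + y \<in> center"
  unfolding center_def by (simp add: distrib_left distrib_right)
lemma center_mult: assumes "x \<in> center" "y \<in> center" shows "x * y \<in> center"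
  unfolding center_def
proof (rule CollectI, rule allI)
  fix r
  have "x * y * r = x * (r * y)" using center_comm[OF assms(2), of r] by (simp add: mult.assoc)
  also have "\<dots> = r * (x * y)" using center_comm[OF assms(1), of r] by (simp add: mult.assoc[symmetric])
  finally show "x * y * r = r * (x * y)" .
qed
lemma center_neg: "x \<in> center \<Longrightarrow> - x \<in> center"
  unfolding center_def by simp
lemma center_sc: "sc c \<in> center" unfolding center_def using sc_comm by blast
lemma center_of_nat: "of_nat n \<in> center" unfolding center_def using mult_of_nat_commute by blast

primrec RH :: "nat \<Rightarrow> 'r" where
  "RH 0 = 1"
| "RH (Suc j) = (H + of_nat j) * RH j"

lemma E_RH: "E * RH (Suc j) = (RH (Suc j) - of_nat (Suc j) * RH j) * E"
proof (induction j)
  case 0 then show ?case by (simp add: rel_EH)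
next
  case (Suc j)
  define s :: 'r where "s = of_nat (Suc j)"
  define A where "A = RH (Suc j)"
  define B where "B = RH j"
  have A: "A = (H + of_nat j) * B" unfolding A_def B_def by simp
  have IH: "E * A = (A - s * B) * E" unfolding A_def B_def s_def by (rule Suc.IH)
  have Es: "E * s = s * E" unfolding s_def by (rule mult_of_nat_commute[symmetric])
  have hs: "H - 1 + s = H + of_nat j" unfolding s_def by simp
  have e1: "E * (H + s) = (H + of_nat j) * E"
  proof -
    have "E * (H + s) = (H - 1) * E + s * E" by (simp add: distrib_left Es rel_EH)
    also have "\<dots> = (H - 1 + s) * E" by (simp add: distrib_right)
    finally show ?thesis by (simp only: hs)
  qed
  have Hs: "(H + of_nat j) * s = s * (H + of_nat j)" unfolding s_def by (rule mult_of_nat_commute[symmetric])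
  have e3: "(H + of_nat j) * (s * B) = s * A"
    unfolding A by (simp only: mult.assoc[symmetric] Hs)
  have e4: "(H + of_nat j) * (A - s * B) = (H + of_nat j) * A - s * A"
    by (simp only: right_diff_distrib e3)
  have "E * RH (Suc (Suc j)) = (E * (H + s)) * A" unfolding A_def s_def by (simp add: mult.assoc)
  also have "\<dots> = (H + of_nat j) * ((A - s * B) * E)" by (simp only: e1 mult.assoc IH)
  also have "\<dots> = ((H + of_nat j) * A - s * A) * E"
    by (simp only: mult.assoc[symmetric] e4)
  also have "\<dots> = ((H + s) * A - (1 + s) * A) * E"
  proof -
    have "s = 1 + of_nat j" unfolding s_def by simp
    then show ?thesis by (simp add: algebra_simps)
  qed
  also have "\<dots> = (RH (Suc (Suc j)) - of_nat (Suc (Suc j)) * RH (Suc j)) * E"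
    unfolding A_def s_def by simp
  finally show ?case .
qed

definition wv :: "'v \<Rightarrow> bool" where "wv x \<longleftrightarrow> act E x = act (sc a) x"

lemma W_w: "act E w = act (sc a) w"
  using W unfolding cyclic_whittaker_def whittaker_vector_def by blast

lemma wv_sc: "wv x \<Longrightarrow> wv (act (sc c) x)"
  unfolding wv_def
proof -
  assume x: "act E x = act (sc a) x"
  have "act E (act (sc c) x) = act (sc c * E) x" by (simp add: act_mult sc_comm)
  also have "\<dots> = act (sc c * sc a) x" by (simp add: act_mult x)
  also have "\<dots> = act (sc a) (act (sc c) x)" by (simp add: act_mult sc_comm[of c "sc a"])
  finally show "act E (act (sc c) x) = act (sc a) (act (sc c) x)" .
qed

lemma wv_center: "z \<in> center \<Longrightarrow> wv (act z w)"
  unfolding wv_def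
proof -
  assume z: "z \<in> center"
  have "act E (act z w) = act (z * E) w" by (simp add: act_mult center_comm[OF z])
  also have "\<dots> = act (z * sc a) w" by (simp add: act_mult W_w)
  also have "\<dots> = act (sc a) (act z w)" by (simp add: act_mult center_comm[OF z])
  finally show "act E (act z w) = act (sc a) (act z w)" .
qed

lemma step_term: assumes "wv x"
  shows "act ((E - sc a) * RH (Suc k)) x = act (RH k) (act (sc (- (of_nat (Suc k) * a))) x)"
proof -
  define s :: 'r where "s = of_nat (Suc k)"
  have sc_s: "sc (- (of_nat (Suc k) * a)) = - (s * sc a)"
    unfolding s_def by (simp add: sc_neg sc_mult sc_of_nat sc_add)
  have "act ((E - sc a) * RH (Suc k)) x = act (E * RH (Suc k)) x - act (sc a * RH (Suc k)) x"
    by (simp add: left_diff_distrib act_diffl)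
  also have "\<dots> = act (RH (Suc k) - s * RH k) (act (sc a) x) - act (sc a * RH (Suc k)) x"
    unfolding E_RH s_def using assms unfolding wv_def by (simp add: act_mult)
  also have "\<dots> = act ((RH (Suc k) - s * RH k) * sc a - sc a * RH (Suc k)) x"
    by (simp add: act_mult act_diffl)
  also have "(RH (Suc k) - s * RH k) * sc a - sc a * RH (Suc k) = RH k * (- (s * sc a))"
  proof -
    have "(RH (Suc k) - s * RH k) * sc a - sc a * RH (Suc k) = - (s * RH k * sc a)"
      using sc_comm[of a "RH (Suc k)"] by (simp add: algebra_simps)
    also have "\<dots> = RH k * (- (s * sc a))"
    proof -
      have c: "s * RH k = RH k * s" unfolding s_def by (rule mult_of_nat_commute)
      show ?thesis by (simp add: c mult.assoc)
    qed
    finally show ?thesis .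
  qed
  finally have "act ((E - sc a) * RH (Suc k)) x = act (RH k * (- (s * sc a))) x" .
  then show ?thesis by (simp only: act_mult sc_s)
qed

lemma indep: "(\<forall>j<N. wv (x j)) \<Longrightarrow> (\<Sum>j<N. act (RH j) (x j)) = 0 \<Longrightarrow> \<forall>j<N. x j = 0"
proof (induction N arbitrary: x)
  case 0 then show ?case by simp
next
  case (Suc N)
  define y where "y k = act (sc (- (of_nat (Suc k) * a))) (x (Suc k))" for k
  have "act (E - sc a) (\<Sum>j<Suc N. act (RH j) (x j)) = (\<Sum>j<Suc N. act ((E - sc a) * RH j) (x j))"
    unfolding act_sumr by (simp only: act_mult)
  also have "\<dots> = act (E - sc a) (x 0) + (\<Sum>k<N. act ((E - sc a) * RH (Suc k)) (x (Suc k)))"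
    by (simp add: sum.lessThan_Suc_shift del: sum.lessThan_Suc)
  also have "act (E - sc a) (x 0) = 0" using Suc.prems(1) unfolding wv_def by (simp add: act_diffl)
  also have "(\<Sum>k<N. act ((E - sc a) * RH (Suc k)) (x (Suc k))) = (\<Sum>k<N. act (RH k) (y k))"
    unfolding y_def by (rule sum.cong[OF refl], rule step_term) (simp add: Suc.prems(1))
  finally have "(\<Sum>k<N. act (RH k) (y k)) = 0" using Suc.prems(2) by simp
  moreover have "\<forall>k<N. wv (y k)" unfolding y_def using Suc.prems(1) by (simp add: wv_sc)
  ultimately have "\<forall>k<N. y k = 0" using Suc.IH by blast
  then have xs: "\<forall>k<N. x (Suc k) = 0"
  proof (intro allI impI)
    fix k assume yk: "\<forall>k<N. y k = 0" and k: "k < N"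
    show "x (Suc k) = 0"
    proof (rule sc_inv_act)
      show "- (of_nat (Suc k) * a) \<noteq> 0" using a0 by (simp del: of_nat_Suc)
      show "act (sc (- (of_nat (Suc k) * a))) (x (Suc k)) = 0" using yk k unfolding y_def by blast
    qed
  qed
  have "(\<Sum>j<Suc N. act (RH j) (x j)) = x 0 + (\<Sum>k<N. act (RH (Suc k)) (x (Suc k)))"
    by (simp add: sum.lessThan_Suc_shift del: sum.lessThan_Suc)
  also have "(\<Sum>k<N. act (RH (Suc k)) (x (Suc k))) = 0" using xs by simp
  finally have "x 0 = 0" using Suc.prems(2) by simp
  then show ?case using xs by (auto simp: less_Suc_eq_0_disj)
qed


definition II :: "'r set" where "II = lspan (R_eta sc E a)"
definition GG :: "'r set" where
  "GG = {r. \<exists>N z. (\<forall>j. z j \<in> center) \<and> r - (\<Sum>j<(N::nat). RH j * z j) \<in> II}"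

lemma GG_E: assumes "g \<in> GG"
  obtains N z where "\<forall>j. z j \<in> center" "g - (\<Sum>j<(N::nat). RH j * z j) \<in> II"
  using assms unfolding GG_def by blast

lemma GG_In: "\<forall>j. z j \<in> center \<Longrightarrow> g - (\<Sum>j<(N::nat). RH j * z j) \<in> II \<Longrightarrow> g \<in> GG"
  unfolding GG_def by blast

lemma GG_I: "i \<in> II \<Longrightarrow> i \<in> GG"
  by (rule GG_In[of "\<lambda>j. 0" _ 0]) (simp_all add: center_0)

lemma GG_0: "0 \<in> GG" by (rule GG_I) (simp add: II_def lspan_0)

lemma GG_addI: assumes "g \<in> GG" "i \<in> II" shows "g + i \<in> GG"
proof -
  obtain N z where z: "\<forall>j. z j \<in> center" "g - (\<Sum>j<(N::nat). RH j * z j) \<in> II"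
    using GG_E[OF assms(1)] by blast
  have e: "g + i - (\<Sum>j<N. RH j * z j) = (g - (\<Sum>j<N. RH j * z j)) + i" by (simp add: algebra_simps)
  have "g + i - (\<Sum>j<N. RH j * z j) \<in> II"
    unfolding e using z(2) assms(2) lspan_add unfolding II_def by blast
  then show ?thesis using z(1) by (rule GG_In[rotated])
qed

lemma trunc: assumes "N \<le> M"
  shows "(\<Sum>j<M. RH j * (if j < N then z j else 0)) = (\<Sum>j<N. RH j * z j)"
  by (rule sum.mono_neutral_cong_right) (use assms in auto)

lemma GG_add: assumes "g1 \<in> GG" "g2 \<in> GG" shows "g1 + g2 \<in> GG"
proof -
  obtain N1 z1 where z1: "\<forall>j. z1 j \<in> center" "g1 - (\<Sum>j<(N1::nat). RH j * z1 j) \<in> II"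
    using GG_E[OF assms(1)] by blast
  obtain N2 z2 where z2: "\<forall>j. z2 j \<in> center" "g2 - (\<Sum>j<(N2::nat). RH j * z2 j) \<in> II"
    using GG_E[OF assms(2)] by blast
  define z where "z j = (if j < N1 then z1 j else 0) + (if j < N2 then z2 j else 0)" for j
  have zc: "\<forall>j. z j \<in> center" unfolding z_def using z1(1) z2(1) by (simp add: center_add center_0)
  have "(\<Sum>j<N1 + N2. RH j * z j) = (\<Sum>j<N1 + N2. RH j * (if j < N1 then z1 j else 0))
      + (\<Sum>j<N1 + N2. RH j * (if j < N2 then z2 j else 0))"
    unfolding z_def by (simp add: distrib_left sum.distrib)
  also have "\<dots> = (\<Sum>j<N1. RH j * z1 j) + (\<Sum>j<N2. RH j * z2 j)"
    by (simp add: trunc)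
  finally have "g1 + g2 - (\<Sum>j<N1 + N2. RH j * z j)
      = (g1 - (\<Sum>j<N1. RH j * z1 j)) + (g2 - (\<Sum>j<N2. RH j * z2 j))"
    by (simp add: algebra_simps)
  then have "g1 + g2 - (\<Sum>j<N1 + N2. RH j * z j) \<in> II"
    using z1(2) z2(2) lspan_add unfolding II_def by metis
  then show ?thesis using zc by (rule GG_In[rotated])
qed

lemma GG_cmul: assumes "c \<in> center" "g \<in> GG" shows "c * g \<in> GG"
proof -
  obtain N z where z: "\<forall>j. z j \<in> center" "g - (\<Sum>j<(N::nat). RH j * z j) \<in> II"
    using GG_E[OF assms(2)] by blast
  have zc: "\<forall>j. c * z j \<in> center" using z(1) assms(1) by (simp add: center_mult)
  have "c * (RH j * z j) = RH j * (c * z j)" for j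
    using center_comm[OF assms(1), of "RH j"] by (simp add: mult.assoc[symmetric])
  then have "c * g - (\<Sum>j<N. RH j * (c * z j)) = c * (g - (\<Sum>j<N. RH j * z j))"
    by (simp add: right_diff_distrib sum_distrib_left)
  then have "c * g - (\<Sum>j<N. RH j * (c * z j)) \<in> II"
    using z(2) lspan_lmult unfolding II_def by metis
  then show ?thesis using zc by (rule GG_In[rotated])
qed

lemma GG_neg: "g \<in> GG \<Longrightarrow> - g \<in> GG"
  using GG_cmul[OF center_neg[OF center_1]] by simp

lemma GG_single: assumes "z \<in> center" shows "RH j * z \<in> GG"
proof -
  have zc: "\<forall>k. (if k = j then z else 0) \<in> center" by (simp add: assms center_0)
  have "(\<Sum>k<Suc j. RH k * (if k = j then z else 0)) = (\<Sum>k<Suc j. if k = j then RH k * z else 0)"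
    by (rule sum.cong) auto
  also have "\<dots> = RH j * z" by (simp add: sum.delta)
  finally have "RH j * z - (\<Sum>k<Suc j. RH k * (if k = j then z else 0)) \<in> II"
    by (simp add: II_def lspan_0)
  then show ?thesis using zc by (rule GG_In[rotated])
qed

lemma GG_sum: "(\<And>i. i \<in> A \<Longrightarrow> g i \<in> GG) \<Longrightarrow> sum g A \<in> GG"
proof (induction A rule: infinite_finite_induct)
  case (infinite A) then show ?case by (simp add: GG_0)
next
  case empty then show ?case by (simp add: GG_0)
next
  case (insert x F) then show ?case by (simp add: GG_add)
qed

lemma GG_lift: assumes "\<And>j z. z \<in> center \<Longrightarrow> X * (RH j * z) \<in> GG" "g \<in> GG"
  shows "X * g \<in> GG"
proof -
  obtain N z where z: "\<forall>j. z j \<in> center" "g - (\<Sum>j<(N::nat). RH j * z j) \<in> II"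
    using GG_E[OF assms(2)] by blast
  have "X * (\<Sum>j<N. RH j * z j) \<in> GG"
    unfolding sum_distrib_left by (rule GG_sum) (use assms(1) z(1) in blast)
  moreover have "X * (g - (\<Sum>j<N. RH j * z j)) \<in> II"
    using z(2) lspan_lmult unfolding II_def by metis
  moreover have "X * g = X * (\<Sum>j<N. RH j * z j) + X * (g - (\<Sum>j<N. RH j * z j))"
    by (simp add: algebra_simps)
  ultimately show ?thesis using GG_addI by metis
qed

lemma GG_H: assumes "g \<in> GG" shows "H * g \<in> GG"
proof (rule GG_lift[OF _ assms])
  fix j and z :: 'r assume z: "z \<in> center"
  have eq: "H * (RH j * z) = RH (Suc j) * z + (- of_nat j) * (RH j * z)"
    by (simp add: algebra_simps)
  have "RH (Suc j) * z + (- of_nat j) * (RH j * z) \<in> GG"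
    by (intro GG_add GG_single GG_cmul center_neg center_of_nat z)
  then show "H * (RH j * z) \<in> GG" by (simp only: eq)
qed

lemma R_eta_lin: "E - sc a \<in> R_eta sc E a"
proof -
  have "peval sc [:-a, 1:] E = E - sc a" by (simp add: peval_pCons sc_neg)
  moreover have "poly [:-a, 1:] a = 0" by simp
  ultimately show ?thesis unfolding R_eta_def mem_Collect_eq by metis
qed

lemma U_GG: "z \<in> center \<Longrightarrow> peval sc p H * z \<in> GG"
proof (induction p arbitrary: z)
  case 0 then show ?case by (simp add: GG_0)
next
  case (pCons c p)
  have eq: "peval sc (pCons c p) H * z = RH 0 * (sc c * z) + H * (peval sc p H * z)"
    by (simp add: peval_pCons distrib_right mult.assoc)
  have "RH 0 * (sc c * z) + H * (peval sc p H * z) \<in> GG"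
    by (rule GG_add[OF GG_single[OF center_mult[OF center_sc pCons.prems]] GG_H[OF pCons.IH[OF pCons.prems]]])
  then show ?case by (simp only: eq)
qed

lemma Fz: assumes z: "z \<in> center" shows "F * z \<in> GG"
proof -
  define x where "x = inverse (2 * a)"
  define c where "c = sc x"
  define d where "d = sc (- (x + x))"
  have d1: "d * E = - (E * c) - (E * c)"
  proof -
    have dd: "d = - (c + c)" unfolding d_def c_def by (simp only: sc_neg sc_add)
    have "d * E = E * d" unfolding d_def by (rule sc_comm)
    also have "E * d = - (E * c) - (E * c)" unfolding dd by (simp add: algebra_simps)
    finally show ?thesis .
  qed
  have d2: "d * sc a = -1"
  proof -
    have "(- (x + x)) * a = -1" unfolding x_def using a0 by (simp add: field_simps)
    then show ?thesis unfolding d_def by (simp add: sc_mult[symmetric] sc_neg)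
  qed
  have key: "F = Om * c - U * c + (F * d) * (E - sc a)"
  proof -
    have "(F * d) * (E - sc a) = F * (d * E) - F * (d * sc a)"
      by (simp add: mult.assoc right_diff_distrib)
    also have "\<dots> = - (F * (E * c)) - F * (E * c) + F" by (simp add: d1 d2 algebra_simps)
    finally have "(F * d) * (E - sc a) = - (F * (E * c)) - F * (E * c) + F" .
    moreover have "Om * c = F * (E * c) + F * (E * c) + U * c"
      unfolding Om_def by (simp add: distrib_right mult.assoc)
    ultimately show ?thesis by simp
  qed
  have cc: "c \<in> center" unfolding c_def by (rule center_sc)
  have "F * z = z * F" using center_comm[OF z] by simp
  also have "\<dots> = z * (Om * c) - z * (U * c) + (z * (F * d)) * (E - sc a)"
    by (subst key) (simp add: distrib_left right_diff_distrib mult.assoc)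
  also have "z * (U * c) = U * (z * c)"
    using center_comm[OF z, of U] by (simp add: mult.assoc[symmetric])
  also have "z * (Om * c) = RH 0 * (z * (Om * c))" by simp
  finally have Fz: "F * z = RH 0 * (z * (Om * c)) + (- 1) * (U * (z * c)) + (z * (F * d)) * (E - sc a)"
    by simp
  have "RH 0 * (z * (Om * c)) \<in> GG"
    by (rule GG_single) (intro center_mult z Om_center cc)
  moreover have "(- 1) * (U * (z * c)) \<in> GG"
    by (rule GG_cmul[OF center_neg[OF center_1]]) (unfold U_def, rule U_GG, intro center_mult z cc)
  moreover have "(z * (F * d)) * (E - sc a) \<in> II"
    unfolding II_def by (rule lspan_lmult, rule lspan_base, rule R_eta_lin)
  ultimately show ?thesis unfolding Fz by (intro GG_addI GG_add)
qed

lemma GG_F_RH: "z \<in> center \<Longrightarrow> F * (RH j * z) \<in> GG"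
proof (induction j arbitrary: z)
  case 0 then show ?case by (simp add: Fz)
next
  case (Suc j)
  have c: "of_nat j * RH j = RH j * of_nat j" by (rule mult_of_nat_commute)
  have "F * (RH (Suc j) * z) = (F * H) * (RH j * z) + F * (RH j * (of_nat j * z))"
    by (simp add: distrib_left distrib_right mult.assoc[symmetric] c)
  also have "\<dots> = H * (F * (RH j * z)) + F * (RH j * z) + F * (RH j * (of_nat j * z))"
    by (simp add: rel_FH distrib_right mult.assoc)
  moreover have "H * (F * (RH j * z)) + F * (RH j * z) + F * (RH j * (of_nat j * z)) \<in> GG"
    by (rule GG_add[OF GG_add[OF GG_H[OF Suc.IH[OF Suc.prems]] Suc.IH[OF Suc.prems]]
          Suc.IH[OF center_mult[OF center_of_nat Suc.prems]]])
  ultimately show ?case by (simp only:)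
qed

lemma GG_F: "g \<in> GG \<Longrightarrow> F * g \<in> GG"
  by (rule GG_lift) (rule GG_F_RH)

lemma GG_all: "r \<in> GG"
proof -
  have Hj: "H ^ j \<in> GG" for j
  proof (induction j)
    case 0 then show ?case using GG_single[OF center_1, of 0] by simp
  next
    case (Suc j) then show ?case using GG_H by simp
  qed
  have FH: "F ^ i * H ^ j \<in> GG" for i j
  proof (induction i)
    case 0 then show ?case using Hj by simp
  next
    case (Suc i) then show ?case using GG_F[OF Suc] by (simp add: mult.assoc)
  qed
  have Ek: "E ^ k - sc (a ^ k) \<in> R_eta sc E a" for k
  proof -
    have "peval sc (monom 1 k - [:a ^ k:]) E = E ^ k - sc (a ^ k)"
      by (simp add: peval_diff peval_monom peval_const)
    moreover have "poly (monom 1 k - [:a ^ k:]) a = 0" by (simp add: poly_monom)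
    ultimately show ?thesis unfolding R_eta_def mem_Collect_eq by metis
  qed
  have mono: "F ^ i * H ^ j * E ^ k \<in> GG" for i j k
  proof -
    have "F ^ i * H ^ j * E ^ k = sc (a ^ k) * (F ^ i * H ^ j) + (F ^ i * H ^ j) * (E ^ k - sc (a ^ k))"
      using sc_comm[of "a ^ k" "F ^ i * H ^ j"] by (simp add: right_diff_distrib)
    moreover have "sc (a ^ k) * (F ^ i * H ^ j) \<in> GG" by (rule GG_cmul[OF center_sc FH])
    moreover have "(F ^ i * H ^ j) * (E ^ k - sc (a ^ k)) \<in> II"
      unfolding II_def by (rule lspan_lmult, rule lspan_base, rule Ek)
    ultimately show ?thesis using GG_addI by metis
  qed
  obtain c where r: "r = (\<Sum>m\<in>{m. c m \<noteq> 0}. sc (c m) * (case m of (i, j, k) \<Rightarrow> F ^ i * H ^ j * E ^ k))"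
    using PBW[of r] by blast
  show ?thesis unfolding r
  proof (rule GG_sum)
    fix m :: "nat \<times> nat \<times> nat"
    obtain i j k where m: "m = (i, j, k)" by (cases m) auto
    show "sc (c m) * (case m of (i, j, k) \<Rightarrow> F ^ i * H ^ j * E ^ k) \<in> GG"
      unfolding m by (simp add: GG_cmul[OF center_sc mono])
  qed
qed

lemma peval_act: "act (peval sc p E) w = act (sc (poly p a)) w"
proof (induction p)
  case 0 then show ?case by simp
next
  case (pCons c p)
  have "act (E * peval sc p E) w = act E (act (sc (poly p a)) w)" by (simp add: act_mult pCons.IH)
  also have "\<dots> = act (sc (poly p a) * E) w" by (simp add: act_mult[symmetric] sc_comm)
  also have "\<dots> = act (sc (a * poly p a)) w" by (simp add: act_mult W_w sc_mult[of a] sc_comm[of a])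
  finally show ?case by (simp add: peval_pCons act_addl sc_add)
qed

lemma lspan_ann: assumes "\<And>s. s \<in> S \<Longrightarrow> act s w = 0" "x \<in> lspan S" shows "act x w = 0"
proof -
  obtain n c s where x: "x = (\<Sum>i<(n::nat). c i * s i)" and s: "\<forall>i<n. s i \<in> S"
    using assms(2) unfolding lspan_def mem_Collect_eq by blast
  show ?thesis unfolding x act_suml using s assms(1) by (simp add: act_mult)
qed

lemma II_ann: "i \<in> II \<Longrightarrow> act i w = 0"
  unfolding II_def
  by (rule lspan_ann) (auto simp: R_eta_def peval_act)

lemma main: "ann_vec act w = {x + y | x y. x \<in> lspan (Z_ann act) \<and> y \<in> lspan (R_eta sc E a)}"
proof (intro equalityI subsetI)
  fix r assume "r \<in> ann_vec act w"
  then have r0: "act r w = 0" unfolding ann_vec_def by simp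
  obtain N z where z: "\<forall>j. z j \<in> center" "r - (\<Sum>j<(N::nat). RH j * z j) \<in> II"
    using GG_E[OF GG_all] by blast
  define s where "s = (\<Sum>j<N. RH j * z j)"
  have "act (r - s) w = 0" using II_ann z(2) unfolding s_def by blast
  then have "act s w = 0" using r0 by (simp add: act_diffl)
  then have "(\<Sum>j<N. act (RH j) (act (z j) w)) = 0" unfolding s_def act_suml by (simp add: act_mult)
  then have zw: "\<forall>j<N. act (z j) w = 0" using indep[of N "\<lambda>j. act (z j) w"] wv_center z(1) by blast
  have "z j \<in> Z_ann act" if "j < N" for j
  proof -
    have "act (z j) v = 0" for v
    proof -
      obtain q where "v = act q w" using W unfolding cyclic_whittaker_def by blast
      then have "act (z j) v = act (q * z j) w" using center_comm[OF z(1)[rule_format, of j], of q]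
        by (simp add: act_mult[symmetric])
      also have "\<dots> = 0" using zw that by (simp add: act_mult)
      finally show ?thesis .
    qed
    then show ?thesis unfolding Z_ann_def annihilator_def using z(1) by blast
  qed
  then have "s \<in> lspan (Z_ann act)" unfolding s_def
    by (intro lspan_sum lspan_lmult lspan_base) simp
  moreover have "r = s + (r - s)" by simp
  ultimately show "r \<in> {x + y | x y. x \<in> lspan (Z_ann act) \<and> y \<in> lspan (R_eta sc E a)}"
    using z(2) unfolding s_def II_def by blast
next
  fix r assume "r \<in> {x + y | x y. x \<in> lspan (Z_ann act) \<and> y \<in> lspan (R_eta sc E a)}"
  then obtain x y where r: "r = x + y" and x: "x \<in> lspan (Z_ann act)" and y: "y \<in> lspan (R_eta sc E a)"
    by blast
  have "act x w = 0"
    by (rule lspan_ann[OF _ x]) (simp add: Z_ann_def annihilator_def)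
  moreover have "act y w = 0" using II_ann y unfolding II_def by blast
  ultimately show "r \<in> ann_vec act w" unfolding ann_vec_def r by (simp add: act_addl)
qed

end

theorem mainTheorem1:
  fixes sc :: "complex \<Rightarrow> 'r::ring_1" and f :: "complex poly" and E F H :: 'r
    and act :: "'r \<Rightarrow> 'v::ab_group_add \<Rightarrow> 'v" and a :: complex and w :: 'v
  assumes "is_R_algebra sc f E F H"
    and "is_module act"
    and "a \<noteq> 0"
    and "cyclic_whittaker sc act E a w"
  shows "ann_vec act w =
           {x + y | x y. x \<in> lspan (Z_ann act) \<and> y \<in> lspan (R_eta sc E a)}"
proof -
  interpret wt sc f E F H act a w using assms by unfold_locales
  show ?thesis by (rule main)
qed

end
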